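(* For every graph $G$, $\mathrm{tn}(G)\le \mathrm{bn}(G)\le 2\,\mathrm{tn}(G)$.
   Context: Two subgraphs $A,B$ of $G$ touch if they share a vertex or some edge of $G$ has one endpoint in $A$ and the other in $B$. A bramble is a set of connected subgraphs of $G$ that pairwise touch; its order is the minimum size of a set of vertices meeting every element (a hitting set); $\mathrm{bn}(G)$ is the maximum order of a bramble in $G$. A tangle is a set $\tau$ of connected subgraphs of $G$ such that for all $A,B,C\in\tau$ there is either a vertex of $G$ in $A\cap B\cap C$, or an edge $e$ of $G$ such that each of $A,B,C$ contains at least one endpoint of $e$. (Every tangle is a bramble.) The order of a tangle is its order as a bramble, and the tangle number $\mathrm{tn}(G)$ is the maximum order of a tangle in $G$. *)

theory Defs
  imports Main
begin

(* A finite graph: finite vertex set V, edge set E given as a symmetric,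
   irreflexive relation on V (each undirected edge uv appears as (u,v) and (v,u)). *)
definition graph :: "'a set \<Rightarrow> ('a \<times> 'a) set \<Rightarrow> bool" where
  "graph V E \<longleftrightarrow> finite V \<and> E \<subseteq> V \<times> V \<and> sym E \<and> irrefl E"

definition subgraph :: "'a set \<Rightarrow> ('a \<times> 'a) set \<Rightarrow> 'a set \<times> ('a \<times> 'a) set \<Rightarrow> bool" where
  "subgraph V E H \<longleftrightarrow> fst H \<subseteq> V \<and> snd H \<subseteq> E \<and> snd H \<subseteq> fst H \<times> fst H \<and> sym (snd H)"

definition connected_subgraph :: "'a set \<Rightarrow> ('a \<times> 'a) set \<Rightarrow> 'a set \<times> ('a \<times> 'a) set \<Rightarrow> bool" where
  "connected_subgraph V E H \<longleftrightarrow> subgraph V E H \<and> fst H \<noteq> {} \<and>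
     (\<forall>x\<in>fst H. \<forall>y\<in>fst H. (x, y) \<in> (snd H)\<^sup>*)"

definition touch :: "('a \<times> 'a) set \<Rightarrow> 'a set \<times> ('a \<times> 'a) set \<Rightarrow> 'a set \<times> ('a \<times> 'a) set \<Rightarrow> bool" where
  "touch E A B \<longleftrightarrow> fst A \<inter> fst B \<noteq> {} \<or> (\<exists>(u, v)\<in>E. u \<in> fst A \<and> v \<in> fst B)"

definition bramble :: "'a set \<Rightarrow> ('a \<times> 'a) set \<Rightarrow> ('a set \<times> ('a \<times> 'a) set) set \<Rightarrow> bool" where
  "bramble V E \<B> \<longleftrightarrow> (\<forall>H\<in>\<B>. connected_subgraph V E H) \<and> (\<forall>A\<in>\<B>. \<forall>B\<in>\<B>. touch E A B)"

definition tangle :: "'a set \<Rightarrow> ('a \<times> 'a) set \<Rightarrow> ('a set \<times> ('a \<times> 'a) set) set \<Rightarrow> bool" where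
  "tangle V E \<T> \<longleftrightarrow> (\<forall>H\<in>\<T>. connected_subgraph V E H) \<and>
     (\<forall>A\<in>\<T>. \<forall>B\<in>\<T>. \<forall>C\<in>\<T>.
        fst A \<inter> fst B \<inter> fst C \<noteq> {} \<or>
        (\<exists>(u, v)\<in>E. (u \<in> fst A \<or> v \<in> fst A) \<and> (u \<in> fst B \<or> v \<in> fst B) \<and> (u \<in> fst C \<or> v \<in> fst C)))"

definition hitting_set :: "'a set \<Rightarrow> ('a set \<times> ('a \<times> 'a) set) set \<Rightarrow> 'a set \<Rightarrow> bool" where
  "hitting_set V \<B> S \<longleftrightarrow> S \<subseteq> V \<and> (\<forall>H\<in>\<B>. S \<inter> fst H \<noteq> {})"

definition bramble_order :: "'a set \<Rightarrow> ('a set \<times> ('a \<times> 'a) set) set \<Rightarrow> nat" where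
  "bramble_order V \<B> = Min {card S | S. hitting_set V \<B> S}"

definition bn :: "'a set \<Rightarrow> ('a \<times> 'a) set \<Rightarrow> nat" where
  "bn V E = Max {bramble_order V \<B> | \<B>. bramble V E \<B>}"

definition tn :: "'a set \<Rightarrow> ('a \<times> 'a) set \<Rightarrow> nat" where
  "tn V E = Max {bramble_order V \<T> | \<T>. tangle V E \<T>}"

end

theory Submission
  imports Defs
begin

lemma fin_fam:
  assumes "graph V E"
  shows "finite {T. \<forall>H\<in>T. connected_subgraph V E H}"
proof -
  have fV: "finite V" and fE: "finite E" using assms unfolding graph_def
    by (auto intro: finite_subset[of E "V \<times> V"])
  have "{T. \<forall>H\<in>T. connected_subgraph V E H} \<subseteq> Pow (Pow V \<times> Pow E)"
  proof
    fix T assume "T \<in> {T. \<forall>H\<in>T. connected_subgraph V E H}"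
    then have "\<forall>H\<in>T. fst H \<subseteq> V \<and> snd H \<subseteq> E" unfolding connected_subgraph_def subgraph_def by auto
    then show "T \<in> Pow (Pow V \<times> Pow E)"
    proof (intro PowI subsetI)
      fix H assume "\<forall>H\<in>T. fst H \<subseteq> V \<and> snd H \<subseteq> E" "H \<in> T"
      then have "fst H \<in> Pow V" "snd H \<in> Pow E" by auto
      then show "H \<in> Pow V \<times> Pow E" by (cases H) auto
    qed
  qed
  moreover have "finite (Pow (Pow V \<times> Pow E))" using fV fE by simp
  ultimately show ?thesis by (rule finite_subset)
qed

lemma fin_orders_b:
  assumes "graph V E"
  shows "finite {bramble_order V \<B> | \<B>. bramble V E \<B>}"
proof -
  have "{bramble_order V \<B> | \<B>. bramble V E \<B>} \<subseteq> bramble_order V ` {T. \<forall>H\<in>T. connected_subgraph V E H}"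
    unfolding bramble_def by auto
  then show ?thesis using fin_fam[OF assms] by (meson finite_imageI finite_subset)
qed

lemma fin_orders_t:
  assumes "graph V E"
  shows "finite {bramble_order V \<B> | \<B>. tangle V E \<B>}"
proof -
  have "{bramble_order V \<B> | \<B>. tangle V E \<B>} \<subseteq> bramble_order V ` {T. \<forall>H\<in>T. connected_subgraph V E H}"
    unfolding tangle_def by auto
  then show ?thesis using fin_fam[OF assms] by (meson finite_imageI finite_subset)
qed

lemma tangle_bramble:
  assumes "graph V E" "tangle V E T"
  shows "bramble V E T"
proof -
  have sE: "sym E" using assms(1) unfolding graph_def by auto
  have "touch E A B" if "A \<in> T" "B \<in> T" for A B
  proof -
    from assms(2) that have
      "fst A \<inter> fst B \<inter> fst B \<noteq> {} \<or>
        (\<exists>(u, v)\<in>E. (u \<in> fst A \<or> v \<in> fst A) \<and> (u \<in> fst B \<or> v \<in> fst B) \<and> (u \<in> fst B \<or> v \<in> fst B))"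
      unfolding tangle_def by blast
    then show ?thesis unfolding touch_def using sE by (auto dest: symD)
  qed
  then show ?thesis using assms(2) unfolding tangle_def bramble_def by auto
qed

lemma order_le:
  assumes "finite V" "hitting_set V \<B> S"
  shows "bramble_order V \<B> \<le> card S"
proof -
  have "finite {card S | S. hitting_set V \<B> S}"
  proof -
    have "{card S | S. hitting_set V \<B> S} \<subseteq> card ` Pow V" unfolding hitting_set_def by auto
    then show ?thesis using assms(1) by (meson finite_Pow_iff finite_imageI finite_subset)
  qed
  then show ?thesis unfolding bramble_order_def using assms(2) by (auto intro: Min_le)
qed

lemma order_ge:
  assumes "finite V" "hitting_set V \<B> V" "\<And>S. hitting_set V \<B> S \<Longrightarrow> m \<le> card S"
  shows "m \<le> bramble_order V \<B>"
proof -
  have "finite {card S | S. hitting_set V \<B> S}"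
  proof -
    have "{card S | S. hitting_set V \<B> S} \<subseteq> card ` Pow V" unfolding hitting_set_def by auto
    then show ?thesis using assms(1) by (meson finite_Pow_iff finite_imageI finite_subset)
  qed
  moreover have "{card S | S. hitting_set V \<B> S} \<noteq> {}" using assms(2) by auto
  ultimately show ?thesis unfolding bramble_order_def using assms(3)
    by (auto simp: Min_ge_iff)
qed

lemma avoid:
  assumes "finite V" "S \<subseteq> V" "card S < bramble_order V \<B>"
  shows "\<exists>A\<in>\<B>. fst A \<inter> S = {}"
proof (rule ccontr)
  assume "\<not> ?thesis"
  then have "hitting_set V \<B> S" using assms(2) unfolding hitting_set_def by auto
  then have "bramble_order V \<B> \<le> card S" using order_le assms(1) by blast
  then show False using assms(3) by simp
qed

lemma main_construction:
  assumes G: "graph V E" and B: "bramble V E \<B>"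
  shows "\<exists>T. tangle V E T \<and> bramble_order V \<B> \<le> 2 * bramble_order V T"
proof -
  have fV: "finite V" and sE: "sym E" and EV: "E \<subseteq> V \<times> V" using G unfolding graph_def by auto
  define k where "k = bramble_order V \<B>"
  define m where "m = (k + 1) div 2"
  define W where "W S = \<Union>{fst A |A. A \<in> \<B> \<and> fst A \<inter> S = {}}" for S
  define X where "X S = (W S, E \<inter> (W S \<times> W S))" for S
  define T where "T = X ` {S. S \<subseteq> V \<and> card S < m}"
  have Bc: "\<And>A. A \<in> \<B> \<Longrightarrow> connected_subgraph V E A" using B unfolding bramble_def by auto
  have Bt: "\<And>A A'. A \<in> \<B> \<Longrightarrow> A' \<in> \<B> \<Longrightarrow> touch E A A'" using B unfolding bramble_def by auto
  have av: "\<exists>A\<in>\<B>. fst A \<inter> S = {}" if "S \<subseteq> V" "card S < k" for S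
    using avoid[OF fV that[unfolded k_def]] .
  have WV: "W S \<subseteq> V" for S
  proof
    fix x assume "x \<in> W S"
    then obtain A where "A \<in> \<B>" "x \<in> fst A" unfolding W_def by auto
    then show "x \<in> V" using Bc unfolding connected_subgraph_def subgraph_def by blast
  qed
  have sub: "fst A \<subseteq> W S" if "A \<in> \<B>" "fst A \<inter> S = {}" for A S
  proof
    fix x assume "x \<in> fst A"
    moreover have "fst A \<in> {fst A |A. A \<in> \<B> \<and> fst A \<inter> S = {}}" using that by blast
    ultimately show "x \<in> W S" unfolding W_def by (rule UnionI[rotated])
  qed
  have Wmem: "x \<in> W S \<longleftrightarrow> (\<exists>A\<in>\<B>. fst A \<inter> S = {} \<and> x \<in> fst A)" for x S
    unfolding W_def by blast
  have conn: "connected_subgraph V E (X S)" if SV: "S \<subseteq> V" and cS: "card S < m" for S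
  proof -
    have "card S < k" using cS unfolding m_def by linarith
    then obtain A0 where A0: "A0 \<in> \<B>" "fst A0 \<inter> S = {}" using av[OF SV] by blast
    have ne: "fst A0 \<noteq> {}" using Bc[OF A0(1)] unfolding connected_subgraph_def by simp
    have "W S \<noteq> {}" using sub[OF A0] ne by blast
    moreover have "subgraph V E (X S)"
    proof -
      have "sym (E \<inter> (W S \<times> W S))" using sE unfolding sym_def by blast
      then show ?thesis unfolding subgraph_def X_def using WV[of S] by simp
    qed
    moreover have "(x, y) \<in> (E \<inter> (W S \<times> W S))\<^sup>*" if xy: "x \<in> W S" "y \<in> W S" for x y
    proof -
      obtain A1 where A1: "A1 \<in> \<B>" "fst A1 \<inter> S = {}" "x \<in> fst A1" using xy(1) Wmem by blast
      obtain A2 where A2: "A2 \<in> \<B>" "fst A2 \<inter> S = {}" "y \<in> fst A2" using xy(2) Wmem by blast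
      have in_rt: "(a, b) \<in> (E \<inter> (W S \<times> W S))\<^sup>*" if "A \<in> \<B>" "fst A \<inter> S = {}" "a \<in> fst A" "b \<in> fst A" for A a b
      proof -
        have c: "connected_subgraph V E A" using Bc that(1) .
        then have "(a, b) \<in> (snd A)\<^sup>*" using that(3,4) unfolding connected_subgraph_def by blast
        moreover have "snd A \<subseteq> E \<inter> (W S \<times> W S)"
        proof -
          have "snd A \<subseteq> E" "snd A \<subseteq> fst A \<times> fst A" using c unfolding connected_subgraph_def subgraph_def by auto
          moreover have "fst A \<subseteq> W S" using sub[OF that(1,2)] .
          ultimately show ?thesis by blast
        qed
        ultimately show ?thesis using rtrancl_mono by blast
      qed
      from Bt[OF A1(1) A2(1)] show ?thesis unfolding touch_def
      proof
        assume "fst A1 \<inter> fst A2 \<noteq> {}"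
        then obtain z where z: "z \<in> fst A1" "z \<in> fst A2" by blast
        have "(x, z) \<in> (E \<inter> (W S \<times> W S))\<^sup>*" using in_rt[OF A1(1,2) A1(3) z(1)] .
        moreover have "(z, y) \<in> (E \<inter> (W S \<times> W S))\<^sup>*" using in_rt[OF A2(1,2) z(2) A2(3)] .
        ultimately show ?thesis by (rule rtrancl_trans)
      next
        assume "\<exists>(u, v)\<in>E. u \<in> fst A1 \<and> v \<in> fst A2"
        then obtain u v where uv: "(u, v) \<in> E" "u \<in> fst A1" "v \<in> fst A2" by blast
        have "(u, v) \<in> E \<inter> (W S \<times> W S)" using uv sub[OF A1(1,2)] sub[OF A2(1,2)] by auto
        then have "(u, v) \<in> (E \<inter> (W S \<times> W S))\<^sup>*" by blast
        then have "(x, v) \<in> (E \<inter> (W S \<times> W S))\<^sup>*"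
          using in_rt[OF A1(1,2) A1(3) uv(2)] by (meson rtrancl_trans)
        then show ?thesis using in_rt[OF A2(1,2) uv(3) A2(3)] by (meson rtrancl_trans)
      qed
    qed
    ultimately show ?thesis unfolding connected_subgraph_def X_def by simp
  qed
  have tang: "tangle V E T"
    unfolding tangle_def
  proof (intro conjI ballI)
    fix H assume "H \<in> T" then show "connected_subgraph V E H" unfolding T_def using conn by auto
  next
    fix H1 H2 H3 assume "H1 \<in> T" "H2 \<in> T" "H3 \<in> T"
    then obtain S1 S2 S3 where S: "S1 \<subseteq> V" "card S1 < m" "H1 = X S1"
      "S2 \<subseteq> V" "card S2 < m" "H2 = X S2" "S3 \<subseteq> V" "card S3 < m" "H3 = X S3"
      unfolding T_def by auto
    have "card (S1 \<union> S2) \<le> card S1 + card S2" by (rule card_Un_le)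
    then have "card (S1 \<union> S2) < k" using S(2,5) unfolding m_def by linarith
    moreover have "S1 \<union> S2 \<subseteq> V" using S(1,4) by simp
    ultimately obtain A where A: "A \<in> \<B>" "fst A \<inter> (S1 \<union> S2) = {}" using av by blast
    have "card S3 < k" using S(8) unfolding m_def by linarith
    then obtain A3 where A3: "A3 \<in> \<B>" "fst A3 \<inter> S3 = {}" using av[OF S(7)] by blast
    have a1: "fst A \<subseteq> fst H1" using sub[of A S1] A S(3) unfolding X_def by auto
    have a2: "fst A \<subseteq> fst H2" using sub[of A S2] A S(6) unfolding X_def by auto
    have a3: "fst A3 \<subseteq> fst H3" using sub[OF A3] S(9) unfolding X_def by auto
    from Bt[OF A(1) A3(1)]
    show "fst H1 \<inter> fst H2 \<inter> fst H3 \<noteq> {} \<or>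
        (\<exists>(u, v)\<in>E. (u \<in> fst H1 \<or> v \<in> fst H1) \<and> (u \<in> fst H2 \<or> v \<in> fst H2) \<and> (u \<in> fst H3 \<or> v \<in> fst H3))"
      unfolding touch_def using a1 a2 a3 by blast
  qed
  have "m \<le> bramble_order V T"
  proof (rule order_ge[OF fV])
    show "hitting_set V T V"
      unfolding hitting_set_def
    proof (intro conjI ballI)
      fix H assume "H \<in> T"
      then have "connected_subgraph V E H" using tang unfolding tangle_def by auto
      then show "V \<inter> fst H \<noteq> {}" unfolding connected_subgraph_def subgraph_def by auto
    qed simp
  next
    fix S assume h: "hitting_set V T S"
    show "m \<le> card S"
    proof (rule ccontr)
      assume "\<not> m \<le> card S"
      then have "card S < m" by simp
      moreover have SV: "S \<subseteq> V" using h unfolding hitting_set_def by auto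
      ultimately have "X S \<in> T" unfolding T_def by auto
      then have "S \<inter> fst (X S) \<noteq> {}" using h unfolding hitting_set_def by blast
      then have "S \<inter> W S \<noteq> {}" unfolding X_def by simp
      then show False unfolding W_def by auto
    qed
  qed
  then have "bramble_order V \<B> \<le> 2 * bramble_order V T" unfolding m_def k_def by linarith
  then show ?thesis using tang by blast
qed

theorem lemma10:
  fixes V :: "'a set" and E :: "('a \<times> 'a) set"
  assumes "graph V E"
  shows "tn V E \<le> bn V E \<and> bn V E \<le> 2 * tn V E"
proof
  have t0: "tangle V E {}" unfolding tangle_def by simp
  have b0: "bramble V E {}" unfolding bramble_def by simp
  show "tn V E \<le> bn V E"
    unfolding tn_def bn_def
    by (rule Max_mono) (use t0 fin_orders_b[OF assms] tangle_bramble[OF assms] in auto)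
  have "bn V E \<in> {bramble_order V \<B> | \<B>. bramble V E \<B>}"
    unfolding bn_def by (rule Max_in) (use b0 fin_orders_b[OF assms] in auto)
  then obtain \<B> where B: "bramble V E \<B>" "bn V E = bramble_order V \<B>" by auto
  obtain T where T: "tangle V E T" "bramble_order V \<B> \<le> 2 * bramble_order V T"
    using main_construction[OF assms B(1)] by blast
  have "bramble_order V T \<le> tn V E"
    unfolding tn_def by (rule Max_ge) (use T(1) fin_orders_t[OF assms] in auto)
  then show "bn V E \<le> 2 * tn V E" using B(2) T(2) by linarith
qed

end
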